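(* For three players whose utility functions satisfy the nonnegativity, Lipschitz and monotonicity conditions described in the context, an $\epsilon$ envy-free solution (in the discrete sense described in the context) can be found in time $O(\log^2(K/\epsilon))$.
   Context: Three players $0,1,2$ have utility functions $u_i$ on Borel subsets of $[0,1]$ satisfying: (nonnegativity) $u_i(\emptyset)=0$ and $u_i(A)>0$ for nonempty pieces (intervals of positive length); (Lipschitz) $u_i([x,y])\le K|y-x|$ for every interval $[x,y]\subseteq[0,1]$; (monotonicity) $u_i(B)\le u_i(A)$ whenever $B\subseteq A$ (e.g. $u_i$ is a measure). Let $N=\lceil K/\epsilon\rceil$. A 2-cut is an integer vector $(x_0,x_1,x_2)$ with $x_j\ge0$, $x_0+x_1+x_2=N$, cutting $[0,1]$ into pieces $[0,x_0/N]$, $[x_0/N,(x_0+x_1)/N]$, $[(x_0+x_1)/N,1]$, indexed $0,1,2$. For a cut $x$, $P_i(x)$ denotes the index of the piece of $x$ of maximum utility for player $i$; it is assumed (non-degeneracy) that this maximizer is unique. The utilities (equivalently, the choices $P_i$) are accessed via queries. Two cuts $x,y$ are adjacent if $|x_i-y_i|\le 1$ for $i=1,2$. An $\epsilon$ envy-free solution is a set $\{x^{(0)},x^{(1)},x^{(2)}\}$ of pairwise adjacent 2-cuts together with a permutation $\pi$ of $\{0,1,2\}$ such that for every player $i$ there is $j$ with $P_i(x^{(j)})=\pi(i)$. *)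

theory Defs
  imports "HOL-Analysis.Analysis" "HOL-Combinatorics.Permutations"
begin

text \<open>Players are 0,1,2. A utility profile is u :: nat => real set => real,
  u i A being the utility of player i for the (Borel) set A.\<close>

definition valid_utility :: "real \<Rightarrow> (real set \<Rightarrow> real) \<Rightarrow> bool" where
  "valid_utility K v \<longleftrightarrow>
     v {} = 0 \<and>
     (\<forall>x y. 0 \<le> x \<longrightarrow> x < y \<longrightarrow> y \<le> 1 \<longrightarrow> v {x..y} > 0) \<and>
     (\<forall>x y. 0 \<le> x \<longrightarrow> x \<le> y \<longrightarrow> y \<le> 1 \<longrightarrow> v {x..y} \<le> K * \<bar>y - x\<bar>) \<and>
     (\<forall>A B. A \<in> sets borel \<longrightarrow> B \<in> sets borel \<longrightarrow> A \<subseteq> {0..1} \<longrightarrow>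
            B \<subseteq> A \<longrightarrow> v B \<le> v A)"

type_synonym cut = "nat \<times> nat \<times> nat"

definition is_cut :: "nat \<Rightarrow> cut \<Rightarrow> bool" where
  "is_cut N x \<longleftrightarrow> (case x of (a, b, c) \<Rightarrow> a + b + c = N)"

definition piece :: "nat \<Rightarrow> cut \<Rightarrow> nat \<Rightarrow> real set" where
  "piece N x j = (case x of (a, b, c) \<Rightarrow>
     if j = 0 then {0 .. real a / real N}
     else if j = 1 then {real a / real N .. real (a + b) / real N}
     else {real (a + b) / real N .. 1})"

definition best_piece :: "(nat \<Rightarrow> real set \<Rightarrow> real) \<Rightarrow> nat \<Rightarrow> nat \<Rightarrow> cut \<Rightarrow> nat \<Rightarrow> bool" where
  "best_piece u N i x j \<longleftrightarrow> j < 3 \<and>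
     (\<forall>k<3. k \<noteq> j \<longrightarrow> u i (piece N x k) < u i (piece N x j))"

definition nondegenerate :: "(nat \<Rightarrow> real set \<Rightarrow> real) \<Rightarrow> nat \<Rightarrow> bool" where
  "nondegenerate u N \<longleftrightarrow> (\<forall>i<3. \<forall>x. is_cut N x \<longrightarrow> (\<exists>j. best_piece u N i x j))"

definition choice :: "(nat \<Rightarrow> real set \<Rightarrow> real) \<Rightarrow> nat \<Rightarrow> nat \<Rightarrow> cut \<Rightarrow> nat" where
  "choice u N i x = (THE j. best_piece u N i x j)"

definition adjacent :: "cut \<Rightarrow> cut \<Rightarrow> bool" where
  "adjacent x y \<longleftrightarrow> (case x of (x0, x1, x2) \<Rightarrow> case y of (y0, y1, y2) \<Rightarrow>
      \<bar>int x1 - int y1\<bar> \<le> 1 \<and> \<bar>int x2 - int y2\<bar> \<le> 1)"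

definition envy_free_solution ::
  "(nat \<Rightarrow> cut \<Rightarrow> nat) \<Rightarrow> nat \<Rightarrow> cut \<Rightarrow> cut \<Rightarrow> cut \<Rightarrow> (nat \<Rightarrow> nat) \<Rightarrow> bool" where
  "envy_free_solution P N y0 y1 y2 \<pi> \<longleftrightarrow>
     is_cut N y0 \<and> is_cut N y1 \<and> is_cut N y2 \<and>
     adjacent y0 y1 \<and> adjacent y0 y2 \<and> adjacent y1 y2 \<and>
     \<pi> permutes {0..<3} \<and>
     (\<forall>i<3. \<exists>y\<in>{y0, y1, y2}. P i y = \<pi> i)"

text \<open>Query algorithms as decision trees: a query asks for P_i(x) and continues
  depending on the answer; a leaf outputs three cuts and a permutation.\<close>
datatype qtree =
    Output cut cut cut "nat \<Rightarrow> nat"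
  | Query nat cut "nat \<Rightarrow> qtree"

primrec run :: "(nat \<Rightarrow> cut \<Rightarrow> nat) \<Rightarrow> qtree \<Rightarrow> cut \<times> cut \<times> cut \<times> (nat \<Rightarrow> nat)" where
  "run P (Output a b c p) = (a, b, c, p)"
| "run P (Query i x f) = run P (f (P i x))"

primrec num_queries :: "(nat \<Rightarrow> cut \<Rightarrow> nat) \<Rightarrow> qtree \<Rightarrow> nat" where
  "num_queries P (Output a b c p) = 0"
| "num_queries P (Query i x f) = Suc (num_queries P (f (P i x)))"

end

theory Submission
  imports Defs "HOL-Library.Log_Nat"
begin


definition cutab :: "nat \<Rightarrow> nat \<Rightarrow> nat \<Rightarrow> cut" where
  "cutab N a b = (a, b - a, N - b)"

lemma is_cut_cutab: "a \<le> b \<Longrightarrow> b \<le> N \<Longrightarrow> is_cut N (cutab N a b)"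
  by (simp add: is_cut_def cutab_def)

lemma piece_cutab:
  assumes "a \<le> b"
  shows "piece N (cutab N a b) 0 = {0 .. real a / real N}"
    "piece N (cutab N a b) 1 = {real a / real N .. real b / real N}"
    "piece N (cutab N a b) 2 = {real b / real N .. 1}"
  using assms by (simp_all add: piece_def cutab_def)

lemma choice_best:
  assumes "nondegenerate u N" "i < 3" "is_cut N x"
  shows "best_piece u N i x (choice u N i x)"
proof -
  obtain j where j: "best_piece u N i x j" using assms unfolding nondegenerate_def by blast
  have "\<And>j'. best_piece u N i x j' \<Longrightarrow> j' = j"
    using j unfolding best_piece_def by (metis less_asym)
  then show ?thesis unfolding choice_def using j by (metis theI)
qed

lemma choice_eq:
  assumes "nondegenerate u N" "i < 3" "is_cut N x" "best_piece u N i x j"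
  shows "choice u N i x = j"
  using choice_best[OF assms(1-3)] assms(4) unfolding best_piece_def by (metis less_asym)

lemma choice_lt3:
  assumes "nondegenerate u N" "i < 3" "is_cut N x"
  shows "choice u N i x < 3"
  using choice_best[OF assms] unfolding best_piece_def by blast

lemma choice_not_zero_piece:
  assumes "nondegenerate u N" "i < 3" "is_cut N x"
    "u i (piece N x j) \<le> 0" "k < 3" "k \<noteq> j" "u i (piece N x k) > 0"
  shows "choice u N i x \<noteq> j"
proof
  assume h: "choice u N i x = j"
  have "best_piece u N i x j" using choice_best[OF assms(1-3)] h by simp
  then show False using assms(4-7) unfolding best_piece_def by force
qed

lemma vu_point: "valid_utility K v \<Longrightarrow> 0 \<le> p \<Longrightarrow> p \<le> 1 \<Longrightarrow> v {p..p} \<le> 0"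
  unfolding valid_utility_def by (metis abs_zero diff_self mult_zero_right order_refl)

lemma vu_pos: "valid_utility K v \<Longrightarrow> 0 \<le> x \<Longrightarrow> x < y \<Longrightarrow> y \<le> 1 \<Longrightarrow> v {x..y} > 0"
  unfolding valid_utility_def by blast

lemma vu_mono: "valid_utility K v \<Longrightarrow> 0 \<le> x \<Longrightarrow> x \<le> x' \<Longrightarrow> y' \<le> y \<Longrightarrow> y \<le> 1
  \<Longrightarrow> v {x'..y'} \<le> v {x..y}"
  unfolding valid_utility_def
  apply (elim conjE)
  apply (drule spec[of _ "{x..y}"], drule spec[of _ "{x'..y'}"])
  by (auto intro: borel_closed)


locale setting =
  fixes u :: "nat \<Rightarrow> real set \<Rightarrow> real" and N :: nat and K :: real
  assumes vu: "\<And>i. i < 3 \<Longrightarrow> valid_utility K (u i)"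
    and nd: "nondegenerate u N" and Npos: "N \<ge> 1"
begin

abbreviation "P \<equiv> choice u N"

lemma divN: "a \<le> N \<Longrightarrow> real a / real N \<le> 1" "0 \<le> real a / real N"
  using Npos by auto

lemma divN_less: "a < b \<Longrightarrow> real a / real N < real b / real N"
  using Npos by (simp add: divide_strict_right_mono)

lemma divN_le: "a \<le> b \<Longrightarrow> real a / real N \<le> real b / real N"
  using Npos by (simp add: divide_right_mono)

lemma P_lt3: "i < 3 \<Longrightarrow> a \<le> b \<Longrightarrow> b \<le> N \<Longrightarrow> P i (cutab N a b) < 3"
  using choice_lt3[OF nd _ is_cut_cutab] by blast

lemma deg: "i < 3 \<Longrightarrow> a \<le> N \<Longrightarrow> u i {real a / real N .. real a / real N} \<le> 0"
  using vu_point[OF vu, of i "real a / real N"] divN[of a] by simp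

lemma posi: "i < 3 \<Longrightarrow> a < b \<Longrightarrow> b \<le> N \<Longrightarrow> u i {real a / real N .. real b / real N} > 0"
  using vu_pos[OF vu, of i "real a / real N" "real b / real N"] divN[of b] divN[of a] divN_less[of a b] by simp

lemma nz0: assumes "i < 3" "b \<le> N" shows "P i (cutab N 0 b) \<noteq> 0"
proof (cases "b = 0")
  case True
  have "u i (piece N (cutab N 0 b) 0) \<le> 0" using deg[OF assms(1), of 0] by (simp add: piece_def cutab_def)
  moreover have "u i (piece N (cutab N 0 b) 2) > 0" using posi[OF assms(1), of 0 N] Npos True
    by (simp add: piece_def cutab_def)
  ultimately show ?thesis
    by (intro choice_not_zero_piece[OF nd assms(1) is_cut_cutab, where k=2]) (use assms in auto)
next
  case False
  have "u i (piece N (cutab N 0 b) 0) \<le> 0" using deg[OF assms(1), of 0] by (simp add: piece_def cutab_def)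
  moreover have "u i (piece N (cutab N 0 b) 1) > 0" using posi[OF assms(1), of 0 b] assms False
    by (simp add: piece_def cutab_def)
  ultimately show ?thesis
    by (intro choice_not_zero_piece[OF nd assms(1) is_cut_cutab, where k=1]) (use assms in auto)
qed

lemma nz1: assumes "i < 3" "a \<le> N" shows "P i (cutab N a a) \<noteq> 1"
proof (cases "a = 0")
  case True
  have "u i (piece N (cutab N a a) 1) \<le> 0" using deg[OF assms] by (simp add: piece_def cutab_def)
  moreover have "u i (piece N (cutab N a a) 2) > 0" using posi[OF assms(1), of 0 N] Npos True
    by (simp add: piece_def cutab_def)
  ultimately show ?thesis
    by (intro choice_not_zero_piece[OF nd assms(1) is_cut_cutab, where k=2]) (use assms in auto)
next
  case False
  have "u i (piece N (cutab N a a) 1) \<le> 0" using deg[OF assms] by (simp add: piece_def cutab_def)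
  moreover have "u i (piece N (cutab N a a) 0) > 0" using posi[OF assms(1), of 0 a] assms False
    by (simp add: piece_def cutab_def)
  ultimately show ?thesis
    by (intro choice_not_zero_piece[OF nd assms(1) is_cut_cutab, where k=0]) (use assms in auto)
qed

lemma nz2: assumes "i < 3" "a \<le> N" shows "P i (cutab N a N) \<noteq> 2"
proof (cases "a = 0")
  case True
  have "u i (piece N (cutab N a N) 2) \<le> 0" using deg[OF assms(1), of N] Npos assms by (simp add: piece_def cutab_def)
  moreover have "u i (piece N (cutab N a N) 1) > 0" using posi[OF assms(1), of 0 N] Npos True
    by (simp add: piece_def cutab_def)
  ultimately show ?thesis
    by (intro choice_not_zero_piece[OF nd assms(1) is_cut_cutab, where k=1]) (use assms in auto)
next
  case False
  have "u i (piece N (cutab N a N) 2) \<le> 0" using deg[OF assms(1), of N] Npos assms by (simp add: piece_def cutab_def)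
  moreover have "u i (piece N (cutab N a N) 0) > 0" using posi[OF assms(1), of 0 a] assms False
    by (simp add: piece_def cutab_def)
  ultimately show ?thesis
    by (intro choice_not_zero_piece[OF nd assms(1) is_cut_cutab, where k=0]) (use assms in auto)
qed

lemma step_util:
  assumes "i < 3" "a + 1 \<le> b" "b \<le> N"
  shows "u i (piece N (cutab N a b) 0) \<le> u i (piece N (cutab N (a+1) b) 0)"
    "u i (piece N (cutab N (a+1) b) 1) \<le> u i (piece N (cutab N a b) 1)"
    "u i (piece N (cutab N (a+1) b) 2) = u i (piece N (cutab N a b) 2)"
proof -
  have ab: "a \<le> b" "a + 1 \<le> b" using assms by auto
  have f: "real a / real N \<le> real (a+1) / real N" "real (a+1) / real N \<le> 1" "0 \<le> real a / real N"
    "real b / real N \<le> 1"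
    using divN_le[of a "a+1"] divN[of "a+1"] divN[of a] divN[of b] assms by auto
  show "u i (piece N (cutab N a b) 0) \<le> u i (piece N (cutab N (a+1) b) 0)"
    unfolding piece_cutab(1)[OF ab(1)] piece_cutab(1)[OF ab(2)]
    by (rule vu_mono[OF vu[OF assms(1)]]) (use f in auto)
  show "u i (piece N (cutab N (a+1) b) 1) \<le> u i (piece N (cutab N a b) 1)"
    unfolding piece_cutab(2)[OF ab(1)] piece_cutab(2)[OF ab(2)]
    by (rule vu_mono[OF vu[OF assms(1)]]) (use f in auto)
  show "u i (piece N (cutab N (a+1) b) 2) = u i (piece N (cutab N a b) 2)"
    unfolding piece_cutab(3)[OF ab(1)] piece_cutab(3)[OF ab(2)] ..
qed

lemma best_piece_iff3: "best_piece u N i x j \<longleftrightarrow> j < 3 \<and>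
   (j \<noteq> 0 \<longrightarrow> u i (piece N x 0) < u i (piece N x j)) \<and>
   (j \<noteq> 1 \<longrightarrow> u i (piece N x 1) < u i (piece N x j)) \<and>
   (j \<noteq> 2 \<longrightarrow> u i (piece N x 2) < u i (piece N x j))"
proof -
  have all3: "\<And>Q. (\<forall>k<(3::nat). Q k) \<longleftrightarrow> Q 0 \<and> Q 1 \<and> Q 2"
    by (metis One_nat_def less_2_cases less_Suc_eq numeral_2_eq_2 numeral_3_eq_3)
  show ?thesis unfolding best_piece_def all3 by (metis (mono_tags))
qed

lemma mA: assumes "i < 3" "a + 1 \<le> b" "b \<le> N" "P i (cutab N a b) = 0"
  shows "P i (cutab N (a+1) b) = 0"
proof -
  have "best_piece u N i (cutab N a b) 0"
    using choice_best[OF nd assms(1) is_cut_cutab[of a b N]] assms by simp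
  then have "best_piece u N i (cutab N (a+1) b) 0"
    using step_util[OF assms(1-3)] unfolding best_piece_iff3 by simp
  then show ?thesis using choice_eq[OF nd assms(1) is_cut_cutab] assms by simp
qed

lemma mB: assumes "i < 3" "a + 1 \<le> b" "b \<le> N" "P i (cutab N a b) = 2"
  shows "P i (cutab N (a+1) b) \<noteq> 1"
proof
  assume h: "P i (cutab N (a+1) b) = 1"
  have "best_piece u N i (cutab N a b) 2"
    using choice_best[OF nd assms(1) is_cut_cutab[of a b N]] assms by simp
  moreover have "best_piece u N i (cutab N (a+1) b) 1"
    using choice_best[OF nd assms(1) is_cut_cutab[of "a+1" b N]] assms h by simp
  ultimately show False
    using step_util[OF assms(1-3)] unfolding best_piece_iff3 by simp
qed

end




definition door :: "nat \<Rightarrow> nat \<Rightarrow> bool" where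
  "door x y \<longleftrightarrow> (x = 0 \<and> y = 1) \<or> (x = 1 \<and> y = 0)"

definition fullx :: "nat \<Rightarrow> nat \<Rightarrow> nat \<Rightarrow> bool" where
  "fullx x y z \<longleftrightarrow> ((door x y \<noteq> door y z) \<noteq> door x z)"

lemma lt3_cases: "x < (3::nat) \<Longrightarrow> x = 0 \<or> x = 1 \<or> x = 2" by auto

lemma fullx_distinct: assumes "x < 3" "y < 3" "z < 3" "fullx x y z" shows "x \<noteq> y \<and> y \<noteq> z \<and> x \<noteq> z"
  using lt3_cases[OF assms(1)] lt3_cases[OF assms(2)] lt3_cases[OF assms(3)] assms(4)
  by (elim disjE) (simp_all add: fullx_def door_def)

primrec rp :: "(nat \<Rightarrow> nat) \<Rightarrow> nat \<Rightarrow> bool" where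
  "rp L 0 = False"
| "rp L (Suc n) = (rp L n \<noteq> door (L n) (L (Suc n)))"

lemma rp_cong: "(\<And>a. a \<le> n \<Longrightarrow> L a = L' a) \<Longrightarrow> rp L n = rp L' n"
  by (induction n) auto

lemma rp01: "(\<And>a. a \<le> n \<Longrightarrow> L a = 0 \<or> L a = 1) \<Longrightarrow> rp L n = (L 0 \<noteq> L n)"
proof (induction n)
  case 0 then show ?case by simp
next
  case (Suc n)
  have ih: "rp L n = (L 0 \<noteq> L n)" using Suc by auto
  have "L n = 0 \<or> L n = 1" "L (Suc n) = 0 \<or> L (Suc n) = 1" "L 0 = 0 \<or> L 0 = 1" using Suc.prems by auto
  then show ?case using ih by (elim disjE) (simp_all add: door_def)
qed

definition zig :: "(nat \<Rightarrow> nat) \<Rightarrow> (nat \<Rightarrow> nat) \<Rightarrow> nat \<Rightarrow> nat" where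
  "zig B T k = (if even k then T (k div 2) else B (k div 2))"

primrec sp :: "(nat \<Rightarrow> nat) \<Rightarrow> nat \<Rightarrow> bool" where
  "sp Z 0 = False"
| "sp Z (Suc m) = (sp Z m \<noteq> door (Z m) (Z (m + 2)))"

lemma S1: "(\<And>k. k < m \<Longrightarrow> \<not> fullx (Z k) (Z (k+1)) (Z (k+2))) \<Longrightarrow>
   (door (Z 0) (Z 1) \<noteq> sp Z m) = door (Z m) (Z (m+1))"
proof (induction m)
  case 0 then show ?case by simp
next
  case (Suc m)
  have "\<not> fullx (Z m) (Z (m+1)) (Z (m+2))" using Suc.prems by auto
  then show ?case using Suc unfolding fullx_def by (auto simp: add.commute)
qed

lemma S2: "sp (zig B T) (2*a) = (rp T a \<noteq> rp B a) \<and> sp (zig B T) (2*a+1) = (rp T (a+1) \<noteq> rp B a)"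
proof (induction a)
  case 0 then show ?case by (simp add: zig_def)
next
  case (Suc a)
  have e1: "2 * Suc a = Suc (2*a+1)" by simp
  have e2: "2 * Suc a + 1 = Suc (2 * Suc a)" by simp
  have z1: "zig B T (2*a+1) = B a" "zig B T (2*a+1+2) = B (Suc a)"
    "zig B T (2*Suc a) = T (Suc a)" "zig B T (2 * Suc a + 2) = T (Suc (Suc a))"
    by (simp_all add: zig_def)
  show ?case unfolding e2 unfolding e1 using Suc z1 by (auto simp: zig_def)
qed

lemma strip:
  assumes "rp T (b+1) \<noteq> rp B b" "\<not> door (T 0) (B 0)" "\<not> door (B b) (T (b+1))"
  shows "\<exists>k<2*b+1. fullx (zig B T k) (zig B T (k+1)) (zig B T (k+2))"
proof (rule ccontr)
  assume "\<not> ?thesis"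
  then have "(door (zig B T 0) (zig B T 1) \<noteq> sp (zig B T) (2*b+1)) = door (zig B T (2*b+1)) (zig B T (2*b+1+1))"
    by (intro S1) auto
  moreover have "zig B T 0 = T 0" "zig B T 1 = B 0" "zig B T (2*b+1) = B b" "zig B T (2*b+1+1) = T (b+1)"
    by (simp_all add: zig_def)
  ultimately show False using S2[of B T b] assms by auto
qed




primrec bs :: "(nat \<Rightarrow> (bool \<Rightarrow> qtree) \<Rightarrow> qtree) \<Rightarrow> nat \<Rightarrow> nat \<Rightarrow> nat \<Rightarrow> (nat \<Rightarrow> qtree) \<Rightarrow> qtree" where
  "bs pr 0 lo hi k = k lo"
| "bs pr (Suc d) lo hi k = (if hi \<le> lo then k lo else
     pr ((lo+hi) div 2) (\<lambda>r. if r then bs pr d (Suc ((lo+hi) div 2)) hi k else bs pr d lo ((lo+hi) div 2) k))"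

lemma bs_spec:
  assumes pr: "\<And>m g. lo0 \<le> m \<Longrightarrow> m < hi0 \<Longrightarrow> run P (pr m g) = run P (g (F m)) \<and>
       num_queries P (pr m g) \<le> w + num_queries P (g (F m))"
  shows "lo0 \<le> lo \<Longrightarrow> hi \<le> hi0 \<Longrightarrow> lo \<le> hi \<Longrightarrow> hi - lo < 2^d \<Longrightarrow>
    \<exists>c. lo \<le> c \<and> c \<le> hi \<and> (lo < c \<longrightarrow> F (c - 1)) \<and> (c < hi \<longrightarrow> \<not> F c) \<and>
      run P (bs pr d lo hi k) = run P (k c) \<and>
      num_queries P (bs pr d lo hi k) \<le> d * w + num_queries P (k c)"
proof (induction d arbitrary: lo hi)
  case 0
  then show ?case by (intro exI[of _ lo]) auto
next
  case (Suc d)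
  show ?case
  proof (cases "hi \<le> lo")
    case True
    then show ?thesis using Suc.prems by (intro exI[of _ lo]) auto
  next
    case False
    define m where "m = (lo+hi) div 2"
    have m1: "m * 2 \<le> lo + hi" "lo + hi \<le> m * 2 + 1" unfolding m_def by auto
    have mr: "lo \<le> m" "m < hi" using m1 False by auto
    have n: "hi - lo < 2 * 2^d" using Suc.prems by simp
    have sz1: "hi - Suc m < 2^d" "m - lo < 2^d" using m1 n False by linarith+
    have bsE: "bs pr (Suc d) lo hi k = pr m (\<lambda>r. if r then bs pr d (Suc m) hi k else bs pr d lo m k)"
      using False unfolding m_def by simp
    have prm: "run P (pr m g) = run P (g (F m)) \<and> num_queries P (pr m g) \<le> w + num_queries P (g (F m))" for g
      using pr[of m g] mr Suc.prems by auto
    show ?thesis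
    proof (cases "F m")
      case True
      obtain c where c: "Suc m \<le> c" "c \<le> hi" "Suc m < c \<longrightarrow> F (c - 1)" "c < hi \<longrightarrow> \<not> F c"
        "run P (bs pr d (Suc m) hi k) = run P (k c)"
        "num_queries P (bs pr d (Suc m) hi k) \<le> d * w + num_queries P (k c)"
        using Suc.IH[of "Suc m" hi] Suc.prems mr sz1 by auto
      have "F (c - 1)" using c True by (cases "c = Suc m") auto
      then show ?thesis using c True mr prm[of "\<lambda>r. if r then bs pr d (Suc m) hi k else bs pr d lo m k"]
        unfolding bsE by (intro exI[of _ c]) auto
    next
      case False
      obtain c where c: "lo \<le> c" "c \<le> m" "lo < c \<longrightarrow> F (c - 1)" "c < m \<longrightarrow> \<not> F c"
        "run P (bs pr d lo m k) = run P (k c)"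
        "num_queries P (bs pr d lo m k) \<le> d * w + num_queries P (k c)"
        using Suc.IH[of lo m] Suc.prems mr sz1 by auto
      have "\<not> F c" using c False by (cases "c = m") auto
      then show ?thesis using c False mr prm[of "\<lambda>r. if r then bs pr d (Suc m) hi k else bs pr d lo m k"]
        unfolding bsE by (intro exI[of _ c]) auto
    qed
  qed
qed




definition qpr :: "nat \<Rightarrow> nat \<Rightarrow> nat \<Rightarrow> (nat \<Rightarrow> bool) \<Rightarrow> nat \<Rightarrow> (bool \<Rightarrow> qtree) \<Rightarrow> qtree" where
  "qpr N i b t m g = Query i (cutab N m b) (\<lambda>ans. g (t ans))"

definition tst :: "nat \<Rightarrow> nat \<Rightarrow> bool" where
  "tst n ans = (if n < 3 then ans = 1 else ans \<noteq> 0)"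

primrec rowt :: "nat \<Rightarrow> nat \<Rightarrow> nat \<Rightarrow> nat \<Rightarrow> (nat \<Rightarrow> nat) \<Rightarrow> ((nat \<Rightarrow> nat) \<Rightarrow> qtree) \<Rightarrow> qtree" where
  "rowt N D b 0 acc g = g acc"
| "rowt N D b (Suc n) acc g =
     bs (qpr N (n mod 3) b (tst n)) D 0 (Suc b) (\<lambda>c. rowt N D b n (acc(n := c)) g)"

definition lab :: "nat \<Rightarrow> (nat \<Rightarrow> nat) \<Rightarrow> nat \<Rightarrow> nat" where
  "lab b th a = (if a < th ((a+b) mod 3) then 1 else if a < th ((a+b) mod 3 + 3) then 2 else 0)"

context setting
begin

definition Lr :: "nat \<Rightarrow> nat \<Rightarrow> nat" where
  "Lr b a = P ((a+b) mod 3) (cutab N a b)"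

definition thspec :: "nat \<Rightarrow> nat \<Rightarrow> nat \<Rightarrow> bool" where
  "thspec b n c \<longleftrightarrow> (\<forall>a\<le>b. (a < c) = tst n (P (n mod 3) (cutab N a b)))"

lemma Fmono1:
  assumes "n < 6" "a + 1 \<le> b" "b \<le> N" "tst n (P (n mod 3) (cutab N (a+1) b))"
  shows "tst n (P (n mod 3) (cutab N a b))"
proof -
  have i: "n mod 3 < 3" by simp
  have lt: "P (n mod 3) (cutab N a b) < 3" using P_lt3[OF i, of a b] assms by simp
  show ?thesis
  proof (cases "n < 3")
    case True
    then have h: "P (n mod 3) (cutab N (a+1) b) = 1" using assms(4) by (simp add: tst_def)
    have "P (n mod 3) (cutab N a b) \<noteq> 0" using mA[OF i assms(2,3)] h by force
    moreover have "P (n mod 3) (cutab N a b) \<noteq> 2" using mB[OF i assms(2,3)] h by force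
    ultimately have "P (n mod 3) (cutab N a b) = 1" using lt by linarith
    then show ?thesis using True by (simp add: tst_def)
  next
    case False
    then have h: "P (n mod 3) (cutab N (a+1) b) \<noteq> 0" using assms(4) by (simp add: tst_def)
    have "P (n mod 3) (cutab N a b) \<noteq> 0" using mA[OF i assms(2,3)] h by force
    then show ?thesis using False by (simp add: tst_def)
  qed
qed

lemma Fmono_aux:
  assumes "n < 6" "b \<le> N"
  shows "a + d \<le> b \<Longrightarrow> tst n (P (n mod 3) (cutab N (a+d) b)) \<Longrightarrow> tst n (P (n mod 3) (cutab N a b))"
proof (induction d arbitrary: a)
  case 0 then show ?case by simp
next
  case (Suc d)
  have "a + 1 + d = a + Suc d" by simp
  then have "tst n (P (n mod 3) (cutab N (a+1) b))" using Suc.IH[of "a+1"] Suc.prems by simp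
  then show ?case using Fmono1[OF assms(1) _ assms(2), of a] Suc.prems by simp
qed

lemma Fmono:
  assumes "n < 6" "a \<le> a'" "a' \<le> b" "b \<le> N" "tst n (P (n mod 3) (cutab N a' b))"
  shows "tst n (P (n mod 3) (cutab N a b))"
  using Fmono_aux[OF assms(1,4), of a "a' - a"] assms by simp

lemma thresh:
  assumes "b \<le> N" "n < 6" "Suc b < 2^D"
  shows "\<exists>c. thspec b n c \<and> run P (bs (qpr N (n mod 3) b (tst n)) D 0 (Suc b) k) = run P (k c) \<and>
     num_queries P (bs (qpr N (n mod 3) b (tst n)) D 0 (Suc b) k) \<le> D + num_queries P (k c)"
proof -
  let ?F = "\<lambda>m. tst n (P (n mod 3) (cutab N m b))"
  obtain c where c: "0 \<le> c" "c \<le> Suc b" "0 < c \<longrightarrow> ?F (c - 1)" "c < Suc b \<longrightarrow> \<not> ?F c"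
    "run P (bs (qpr N (n mod 3) b (tst n)) D 0 (Suc b) k) = run P (k c)"
    "num_queries P (bs (qpr N (n mod 3) b (tst n)) D 0 (Suc b) k) \<le> D * 1 + num_queries P (k c)"
    using bs_spec[of 0 "Suc b" P "qpr N (n mod 3) b (tst n)" ?F 1 0 "Suc b" D k] assms
    by (auto simp: qpr_def)
  have "thspec b n c" unfolding thspec_def
  proof (intro allI impI)
    fix a assume a: "a \<le> b"
    show "(a < c) = ?F a"
    proof
      assume "a < c"
      then show "?F a" using c(2,3) Fmono[OF assms(2) _ _ assms(1), of a "c - 1"] by auto
    next
      assume fa: "?F a"
      show "a < c"
      proof (rule ccontr)
        assume "\<not> a < c"
        then show False using c(4) fa a Fmono[OF assms(2) _ _ assms(1), of c a] by auto
      qed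
    qed
  qed
  then show ?thesis using c by auto
qed

lemma rowt_spec:
  assumes "b \<le> N" "Suc b < 2^D"
  shows "cnt \<le> 6 \<Longrightarrow> \<exists>th. (\<forall>n<cnt. thspec b n (th n)) \<and> (\<forall>n\<ge>cnt. th n = acc n) \<and>
     run P (rowt N D b cnt acc g) = run P (g th) \<and>
     num_queries P (rowt N D b cnt acc g) \<le> cnt * D + num_queries P (g th)"
proof (induction cnt arbitrary: acc)
  case 0 then show ?case by auto
next
  case (Suc n)
  obtain c where c: "thspec b n c"
    "run P (rowt N D b (Suc n) acc g) = run P (rowt N D b n (acc(n := c)) g)"
    "num_queries P (rowt N D b (Suc n) acc g) \<le> D + num_queries P (rowt N D b n (acc(n := c)) g)"
    using thresh[OF assms(1) _ assms(2), of n "\<lambda>c. rowt N D b n (acc(n := c)) g"] Suc.prems by auto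
  obtain th where th: "\<forall>m<n. thspec b m (th m)" "\<forall>m\<ge>n. th m = (acc(n := c)) m"
    "run P (rowt N D b n (acc(n := c)) g) = run P (g th)"
    "num_queries P (rowt N D b n (acc(n := c)) g) \<le> n * D + num_queries P (g th)"
    using Suc.IH[of "acc(n := c)"] Suc.prems by (metis Suc_leD)
  have "th n = c" using th(2) by auto
  then have "\<forall>m<Suc n. thspec b m (th m)" using th(1) c(1) less_Suc_eq by auto
  moreover have "\<forall>m\<ge>Suc n. th m = acc m" using th(2) by auto
  ultimately show ?case using c th by (intro exI[of _ th]) auto
qed

lemma lab_eq:
  assumes "\<forall>n<6. thspec b n (th n)" "a \<le> b" "b \<le> N"
  shows "lab b th a = Lr b a"
proof -
  define w where "w = (a+b) mod 3"
  have w: "w < 3" "(w + 3) mod 3 = w" "w mod 3 = w" unfolding w_def by auto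
  have o6: "w < 6" "w + 3 < 6" using w(1) by auto
  have t1: "thspec b w (th w)" "thspec b (w+3) (th (w+3))" using assms(1) o6 by auto
  have s1: "(a < th w) = (P w (cutab N a b) = 1)"
    using t1(1) assms(2) w unfolding thspec_def tst_def by auto
  have s2: "(a < th (w+3)) = (P w (cutab N a b) \<noteq> 0)"
    using t1(2) assms(2) w unfolding thspec_def tst_def by auto
  have lt: "P w (cutab N a b) < 3" using P_lt3[OF w(1)] assms by auto
  have "lab b th a = (if P w (cutab N a b) = 1 then 1 else if P w (cutab N a b) \<noteq> 0 then 2 else 0)"
    unfolding lab_def w_def[symmetric] s1 s2 ..
  also have "\<dots> = P w (cutab N a b)" using lt3_cases[OF lt] by auto
  finally show ?thesis unfolding Lr_def w_def .
qed

lemma row_spec: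
  assumes "b \<le> N" "Suc b < 2^D"
  shows "\<exists>th. (\<forall>a\<le>b. lab b th a = Lr b a) \<and> run P (rowt N D b 6 acc g) = run P (g th) \<and>
     num_queries P (rowt N D b 6 acc g) \<le> 6 * D + num_queries P (g th)"
proof -
  obtain th where "\<forall>n<6. thspec b n (th n)" "run P (rowt N D b 6 acc g) = run P (g th)"
    "num_queries P (rowt N D b 6 acc g) \<le> 6 * D + num_queries P (g th)"
    using rowt_spec[OF assms, of 6 acc g] by auto
  then show ?thesis using lab_eq[of b th] assms by blast
qed

end




definition vert :: "nat \<Rightarrow> nat \<Rightarrow> nat \<times> nat" where
  "vert b k = (if even k then (k div 2, Suc b) else (k div 2, b))"

definition vcut :: "nat \<Rightarrow> nat \<Rightarrow> nat \<Rightarrow> cut" where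
  "vcut N b k = cutab N (fst (vert b k)) (snd (vert b k))"

definition vown :: "nat \<Rightarrow> nat \<Rightarrow> nat" where
  "vown b k = (fst (vert b k) + snd (vert b k)) mod 3"

definition mkperm :: "nat \<Rightarrow> nat \<Rightarrow> nat \<Rightarrow> nat \<Rightarrow> nat \<Rightarrow> nat \<Rightarrow> nat \<Rightarrow> nat" where
  "mkperm o0 o1 o2 l0 l1 l2 x = (if x = o0 then l0 else if x = o1 then l1 else if x = o2 then l2 else x)"

lemma set3: assumes "x < 3" "y < 3" "z < (3::nat)" "x \<noteq> y" "y \<noteq> z" "x \<noteq> z"
  shows "{x, y, z} = {0..<3}"
  using lt3_cases[OF assms(1)] lt3_cases[OF assms(2)] lt3_cases[OF assms(3)] assms(4-6)
  by (elim disjE) auto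

lemma mkperm_permutes:
  assumes "o0 < 3" "o1 < 3" "o2 < 3" "o0 \<noteq> o1" "o1 \<noteq> o2" "o0 \<noteq> o2"
    "l0 < 3" "l1 < 3" "l2 < 3" "l0 \<noteq> l1" "l1 \<noteq> l2" "l0 \<noteq> l2"
  shows "mkperm o0 o1 o2 l0 l1 l2 permutes {0..<3}"
proof (rule bij_imp_permutes)
  have So: "{0..<3} = {o0, o1, o2}" using set3[of o0 o1 o2] assms by auto
  have Sl: "{0..<3} = {l0, l1, l2}" using set3[of l0 l1 l2] assms by auto
  have v: "mkperm o0 o1 o2 l0 l1 l2 o0 = l0" "mkperm o0 o1 o2 l0 l1 l2 o1 = l1"
    "mkperm o0 o1 o2 l0 l1 l2 o2 = l2" using assms by (auto simp: mkperm_def)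
  show "bij_betw (mkperm o0 o1 o2 l0 l1 l2) {0..<3} {0..<3}"
    unfolding bij_betw_def
  proof
    show "inj_on (mkperm o0 o1 o2 l0 l1 l2) {0..<3}" unfolding So inj_on_def
      using v assms by auto
    have "mkperm o0 o1 o2 l0 l1 l2 ` {0..<3} = {l0, l1, l2}" unfolding So by (simp add: v)
    then show "mkperm o0 o1 o2 l0 l1 l2 ` {0..<3} = {0..<3}" using Sl by simp
  qed
  fix x :: nat assume "x \<notin> {0..<3}"
  then show "mkperm o0 o1 o2 l0 l1 l2 x = x" using So by (auto simp: mkperm_def)
qed

lemma vert_even: "vert b (2*h) = (h, Suc b)" by (simp add: vert_def)
lemma vert_odd: "vert b (2*h+1) = (h, b)" "vert b (Suc (2*h)) = (h, b)" by (simp_all add: vert_def)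

lemma evod: fixes k :: nat obtains h where "k = 2*h" | h where "k = 2*h+1"
  by (metis oddE evenE)

lemma adjI: "\<bar>int x1 - int y1\<bar> \<le> 1 \<Longrightarrow> \<bar>int x2 - int y2\<bar> \<le> 1 \<Longrightarrow> adjacent (x0, x1, x2) (y0, y1, y2)"
  by (simp add: adjacent_def)

lemma adj1: assumes "k + 1 \<le> 2*b+2" "Suc b \<le> N"
  shows "adjacent (vcut N b k) (vcut N b (k+1))"
proof (cases k rule: evod)
  case (1 h)
  have e: "k + 1 = 2*h+1" using 1 by simp
  have "h \<le> b" using 1 assms by simp
  then show ?thesis using 1 assms unfolding vcut_def e
    by (simp add: vert_def cutab_def, intro adjI) linarith+
next
  case (2 h)
  have e: "k + 1 = 2*(h+1)" using 2 by simp
  have "h \<le> b" using 2 assms by simp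
  then show ?thesis using 2 assms unfolding vcut_def e
    by (simp add: vert_def cutab_def, intro adjI) linarith+
qed

lemma adj2: assumes "k + 2 \<le> 2*b+2" "Suc b \<le> N"
  shows "adjacent (vcut N b k) (vcut N b (k+2))"
proof (cases k rule: evod)
  case (1 h)
  have e: "k + 2 = 2*(h+1)" using 1 by simp
  have "h \<le> b" using 1 assms by simp
  then show ?thesis using 1 assms unfolding vcut_def e
    by (simp add: vert_def cutab_def, intro adjI) linarith+
next
  case (2 h)
  have e: "k + 2 = 2*(h+1)+1" using 2 by simp
  have "h + 1 \<le> b" using 2 assms by simp
  then show ?thesis using 2 assms unfolding vcut_def e
    by (simp add: vert_def cutab_def, intro adjI) linarith+
qed

lemma mod3d: "(x::nat) mod 3 \<noteq> (x+1) mod 3 \<and> (x+1) mod 3 \<noteq> (x+2) mod 3 \<and> x mod 3 \<noteq> (x+2) mod 3"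
proof -
  have e: "(x+1) mod 3 = (x mod 3 + 1) mod 3" "(x+2) mod 3 = (x mod 3 + 2) mod 3"
    by (metis mod_add_left_eq)+
  have "x mod 3 < 3" by simp
  then show ?thesis unfolding e using lt3_cases[of "x mod 3"] by auto
qed

lemma vown_distinct: "vown b k \<noteq> vown b (k+1) \<and> vown b (k+1) \<noteq> vown b (k+2) \<and> vown b k \<noteq> vown b (k+2)"
proof (cases k rule: evod)
  case (1 h)
  have e: "k + 1 = 2*h+1" "k+2 = 2*(h+1)" using 1 by simp_all
  have "vown b k = (h+b+1) mod 3" "vown b (k+1) = (h+b) mod 3" "vown b (k+2) = (h+b+2) mod 3"
    unfolding vown_def e 1 by (simp_all add: vert_def)
  then show ?thesis using mod3d[of "h+b"] by metis
next
  case (2 h)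
  have e: "k + 1 = 2*(h+1)" "k+2 = 2*(h+1)+1" using 2 by simp_all
  have "vown b k = (h+b) mod 3" "vown b (k+1) = (h+b+2) mod 3" "vown b (k+2) = (h+b+1) mod 3"
    unfolding vown_def e 2 by (simp_all add: vert_def)
  then show ?thesis using mod3d[of "h+b"] by metis
qed

lemma vert_valid: "k \<le> 2*b+2 \<Longrightarrow> fst (vert b k) \<le> snd (vert b k) \<and> snd (vert b k) \<le> Suc b"
  by (cases k rule: evod) (auto simp: vert_even vert_odd)

lemma vown_lt: "vown b k < 3" by (simp add: vown_def)




definition outp :: "nat \<Rightarrow> nat \<Rightarrow> (nat \<Rightarrow> nat) \<Rightarrow> (nat \<Rightarrow> nat) \<Rightarrow> qtree" where
  "outp N b thb tht = (let Z = zig (lab b thb) (lab (Suc b) tht);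
      k = (LEAST k. fullx (Z k) (Z (k+1)) (Z (k+2))) in
      Output (vcut N b k) (vcut N b (k+1)) (vcut N b (k+2))
        (mkperm (vown b k) (vown b (k+1)) (vown b (k+2)) (Z k) (Z (k+1)) (Z (k+2))))"

definition fin :: "nat \<Rightarrow> nat \<Rightarrow> nat \<Rightarrow> qtree" where
  "fin N D b = rowt N D b 6 (\<lambda>_. 0) (\<lambda>thb. rowt N D (Suc b) 6 (\<lambda>_. 0) (\<lambda>tht. outp N b thb tht))"

definition opr :: "nat \<Rightarrow> nat \<Rightarrow> nat \<Rightarrow> (bool \<Rightarrow> qtree) \<Rightarrow> qtree" where
  "opr N D m g = rowt N D m 6 (\<lambda>_. 0) (\<lambda>th. g (\<not> rp (lab m th) m))"

definition TT :: "nat \<Rightarrow> nat \<Rightarrow> qtree" where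
  "TT N D = bs (opr N D) D 1 N (\<lambda>c. fin N D (c - 1))"

context setting
begin

lemma zig_actual: "k \<le> 2*b+2 \<Longrightarrow> Suc b \<le> N \<Longrightarrow> zig (Lr b) (Lr (Suc b)) k = P (vown b k) (vcut N b k)"
  by (cases k rule: evod) (auto simp: zig_def Lr_def vown_def vcut_def vert_def add.commute)

lemma rowN: "rp (Lr N) N"
proof -
  have h: "Lr N a = 0 \<or> Lr N a = 1" if "a \<le> N" for a
  proof -
    have "Lr N a < 3" "Lr N a \<noteq> 2" unfolding Lr_def using that P_lt3 nz2 by auto
    then show ?thesis by linarith
  qed
  have "Lr N 0 \<noteq> 0" unfolding Lr_def using nz0 by simp
  moreover have "Lr N N \<noteq> 1" unfolding Lr_def using nz1 by simp
  ultimately show ?thesis using rp01[of N "Lr N"] h[of 0] h[of N] h by auto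
qed

lemma strip_actual:
  assumes "Suc b \<le> N" "\<not> rp (Lr b) b" "rp (Lr (Suc b)) (Suc b)"
  shows "\<exists>k<2*b+1. fullx (zig (Lr b) (Lr (Suc b)) k) (zig (Lr b) (Lr (Suc b)) (k+1)) (zig (Lr b) (Lr (Suc b)) (k+2))"
proof (rule strip)
  show "rp (Lr (Suc b)) (b + 1) \<noteq> rp (Lr b) b" using assms by simp
  have "Lr (Suc b) 0 \<noteq> 0" "Lr b 0 \<noteq> 0" unfolding Lr_def using nz0 assms by auto
  then show "\<not> door (Lr (Suc b) 0) (Lr b 0)" by (simp add: door_def)
  have "Lr (Suc b) (b+1) \<noteq> 1" "Lr b b \<noteq> 1" unfolding Lr_def using nz1 assms by auto
  then show "\<not> door (Lr b b) (Lr (Suc b) (b + 1))" by (auto simp: door_def)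
qed

lemma outp_correct:
  assumes "Suc b \<le> N" "\<not> rp (Lr b) b" "rp (Lr (Suc b)) (Suc b)"
    "\<forall>a\<le>b. lab b thb a = Lr b a" "\<forall>a\<le>Suc b. lab (Suc b) tht a = Lr (Suc b) a"
  shows "case run P (outp N b thb tht) of (y0, y1, y2, \<pi>) \<Rightarrow> envy_free_solution P N y0 y1 y2 \<pi>"
proof -
  define Z where "Z = zig (lab b thb) (lab (Suc b) tht)"
  have Zeq2: "Z k = zig (Lr b) (Lr (Suc b)) k" if "k \<le> 2*b+2" for k
      unfolding Z_def zig_def using that assms(4,5) by (cases k rule: evod) auto
  have Zeq: "Z k = P (vown b k) (vcut N b k)" if "k \<le> 2*b+2" for k
    using zig_actual[OF that assms(1)] Zeq2[OF that] by simp
  obtain k1 where k1: "k1 < 2*b+1" "fullx (zig (Lr b) (Lr (Suc b)) k1) (zig (Lr b) (Lr (Suc b)) (k1+1)) (zig (Lr b) (Lr (Suc b)) (k1+2))"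
    using strip_actual[OF assms(1-3)] by blast
  have "Z k1 = zig (Lr b) (Lr (Suc b)) k1" "Z (k1+1) = zig (Lr b) (Lr (Suc b)) (k1+1)"
    "Z (k1+2) = zig (Lr b) (Lr (Suc b)) (k1+2)" using Zeq2 k1(1) by simp_all
  then have k1f: "fullx (Z k1) (Z (k1+1)) (Z (k1+2))" using k1(2) by simp
  define k where "k = (LEAST k. fullx (Z k) (Z (k+1)) (Z (k+2)))"
  have fk: "fullx (Z k) (Z (k+1)) (Z (k+2))" unfolding k_def using k1f by (rule LeastI)
  have kk: "k \<le> k1" unfolding k_def using k1f by (rule Least_le)
  have kb: "k + 2 \<le> 2*b+2" using kk k1 by simp
  have vc: "is_cut N (vcut N b j)" if "j \<le> 2*b+2" for j
    using vert_valid[OF that] assms(1) unfolding vcut_def by (auto intro!: is_cut_cutab)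
  have lt: "Z j < 3" if "j \<le> 2*b+2" for j
    using Zeq[OF that] choice_lt3[OF nd vown_lt vc[OF that]] by simp
  have ldist: "Z k \<noteq> Z (k+1) \<and> Z (k+1) \<noteq> Z (k+2) \<and> Z k \<noteq> Z (k+2)"
    using fullx_distinct[OF lt lt lt fk] kb by simp
  define pm where "pm = mkperm (vown b k) (vown b (k+1)) (vown b (k+2)) (Z k) (Z (k+1)) (Z (k+2))"
  have perm: "pm permutes {0..<3}" unfolding pm_def
    using mkperm_permutes vown_lt vown_distinct ldist lt kb by simp
  have run: "run P (outp N b thb tht) = (vcut N b k, vcut N b (k+1), vcut N b (k+2), pm)"
    unfolding outp_def Z_def[symmetric] k_def[symmetric] pm_def Let_def by simp
  have cover: "\<forall>i<3. \<exists>y\<in>{vcut N b k, vcut N b (k+1), vcut N b (k+2)}. P i y = pm i"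
  proof (intro allI impI)
    fix i :: nat assume i: "i < 3"
    have seteq: "{vown b k, vown b (k+1), vown b (k+2)} = {0..<3}"
      using vown_distinct[of b k] by (intro set3 vown_lt) auto
    have "i \<in> {0..<3}" using i by simp
    then have "i \<in> {vown b k, vown b (k+1), vown b (k+2)}" by (subst seteq)
    then have ii: "i = vown b k \<or> i = vown b (k+1) \<or> i = vown b (k+2)" by simp
    have p: "pm (vown b k) = Z k" "pm (vown b (k+1)) = Z (k+1)" "pm (vown b (k+2)) = Z (k+2)"
      unfolding pm_def mkperm_def using vown_distinct[of b k] by auto
    have z: "Z k = P (vown b k) (vcut N b k)" "Z (k+1) = P (vown b (k+1)) (vcut N b (k+1))"
      "Z (k+2) = P (vown b (k+2)) (vcut N b (k+2))" using Zeq kb by simp_all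
    from ii show "\<exists>y\<in>{vcut N b k, vcut N b (k+1), vcut N b (k+2)}. P i y = pm i"
    proof (elim disjE)
      assume "i = vown b k" then show ?thesis using p z by (intro bexI[of _ "vcut N b k"]) auto
    next
      assume "i = vown b (k+1)" then show ?thesis using p z by (intro bexI[of _ "vcut N b (k+1)"]) auto
    next
      assume "i = vown b (k+2)" then show ?thesis using p z by (intro bexI[of _ "vcut N b (k+2)"]) auto
    qed
  qed
  have a1: "adjacent (vcut N b k) (vcut N b (k+1))" using adj1[of k b N] kb assms(1) by simp
  have a2: "adjacent (vcut N b k) (vcut N b (k+2))" using adj2[of k b N] kb assms(1) by simp
  have a3: "adjacent (vcut N b (k+1)) (vcut N b (k+2))" using adj1[of "k+1" b N] kb assms(1)
    by (simp add: add.assoc)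
  have c3: "is_cut N (vcut N b k)" "is_cut N (vcut N b (k+1))" "is_cut N (vcut N b (k+2))"
    using vc kb by simp_all
  have "envy_free_solution P N (vcut N b k) (vcut N b (k+1)) (vcut N b (k+2)) pm"
    unfolding envy_free_solution_def by (intro conjI a1 a2 a3 c3 perm cover)
  then show ?thesis unfolding run by (simp only: prod.case)
qed

end




context setting
begin

lemma TT_spec:
  assumes D: "Suc N < 2^D"
  shows "(case run P (TT N D) of (y0, y1, y2, \<pi>) \<Rightarrow> envy_free_solution P N y0 y1 y2 \<pi>) \<and>
    num_queries P (TT N D) \<le> 6*D*D + 12*D"
proof -
  let ?F = "\<lambda>m. \<not> rp (Lr m) m"
  have pr: "run P (opr N D m g) = run P (g (?F m)) \<and> num_queries P (opr N D m g) \<le> 6*D + num_queries P (g (?F m))"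
    if mr: "1 \<le> m" "m < N" for m g
  proof -
    obtain th where th: "\<forall>a\<le>m. lab m th a = Lr m a"
      "run P (rowt N D m 6 (\<lambda>_. 0) (\<lambda>th. g (\<not> rp (lab m th) m))) = run P (g (\<not> rp (lab m th) m))"
      "num_queries P (rowt N D m 6 (\<lambda>_. 0) (\<lambda>th. g (\<not> rp (lab m th) m))) \<le> 6 * D + num_queries P (g (\<not> rp (lab m th) m))"
      using row_spec[of m D "\<lambda>_. 0" "\<lambda>th. g (\<not> rp (lab m th) m)"] mr D by auto
    have "rp (lab m th) m = rp (Lr m) m" using th(1) by (intro rp_cong) auto
    then show ?thesis using th unfolding opr_def by simp
  qed
  obtain c where c: "1 \<le> c" "c \<le> N" "1 < c \<longrightarrow> ?F (c - 1)" "c < N \<longrightarrow> \<not> ?F c"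
    "run P (TT N D) = run P (fin N D (c - 1))"
    "num_queries P (TT N D) \<le> D * (6*D) + num_queries P (fin N D (c - 1))"
    using bs_spec[of 1 N P "opr N D" ?F "6*D" 1 N D "\<lambda>c. fin N D (c - 1)"] pr Npos D
    unfolding TT_def by fastforce
  define b where "b = c - 1"
  have bS: "Suc b = c" using c(1) b_def by simp
  have nb: "\<not> rp (Lr b) b"
  proof (cases "c = 1")
    case True then show ?thesis using b_def by simp
  next
    case False then show ?thesis using c(1,3) b_def by simp
  qed
  have nb1: "rp (Lr (Suc b)) (Suc b)"
  proof (cases "c = N")
    case True then show ?thesis using bS rowN by simp
  next
    case False then show ?thesis using c(2,4) bS by simp
  qed
  have bN: "Suc b \<le> N" using bS c(2) by simp
  obtain thb where thb: "\<forall>a\<le>b. lab b thb a = Lr b a"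
    "run P (fin N D b) = run P (rowt N D (Suc b) 6 (\<lambda>_. 0) (\<lambda>tht. outp N b thb tht))"
    "num_queries P (fin N D b) \<le> 6 * D + num_queries P (rowt N D (Suc b) 6 (\<lambda>_. 0) (\<lambda>tht. outp N b thb tht))"
    using row_spec[of b D "\<lambda>_. 0" "\<lambda>thb. rowt N D (Suc b) 6 (\<lambda>_. 0) (\<lambda>tht. outp N b thb tht)"] bN D
    unfolding fin_def by auto
  obtain tht where tht: "\<forall>a\<le>Suc b. lab (Suc b) tht a = Lr (Suc b) a"
    "run P (rowt N D (Suc b) 6 (\<lambda>_. 0) (\<lambda>tht. outp N b thb tht)) = run P (outp N b thb tht)"
    "num_queries P (rowt N D (Suc b) 6 (\<lambda>_. 0) (\<lambda>tht. outp N b thb tht)) \<le> 6 * D + num_queries P (outp N b thb tht)"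
    using row_spec[of "Suc b" D "\<lambda>_. 0" "\<lambda>tht. outp N b thb tht"] bN D by auto
  have nq0: "num_queries P (outp N b thb tht) = 0" unfolding outp_def Let_def by simp
  have "case run P (outp N b thb tht) of (y0, y1, y2, \<pi>) \<Rightarrow> envy_free_solution P N y0 y1 y2 \<pi>"
    using outp_correct[OF bN nb nb1 thb(1) tht(1)] .
  moreover have "run P (TT N D) = run P (outp N b thb tht)" using c(5) thb(2) tht(2) b_def by simp
  moreover have "num_queries P (TT N D) \<le> 6*D*D + 12*D"
    using c(6) thb(3) tht(3) nq0 b_def by simp
  ultimately show ?thesis by simp
qed

end

lemma ln2_ge: "ln (2::real) \<ge> 1/2"
proof -
  have "ln (1/2::real) \<le> 1/2 - 1" by (rule ln_le_minus_one) simp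
  moreover have "ln (1/2::real) = - ln 2" by (simp add: ln_div)
  ultimately show ?thesis by simp
qed

lemma bound:
  fixes r :: real
  assumes r: "r > 0"
  defines "N \<equiv> nat \<lceil>r\<rceil>"
  defines "D \<equiv> floorlog 2 N + 1"
  shows "real (6*D*D + 12*D) \<le> 200 * (ln r)^2 + 200" and "Suc N < 2^D" and "N \<ge> 1"
proof -
  show N1: "N \<ge> 1" unfolding N_def using r by (simp add: Suc_le_eq)
  have fb: "2 ^ (floorlog 2 N - 1) \<le> N" "N < 2 ^ floorlog 2 N" using floorlog_bounds[of N 2] N1 by auto
  have "Suc N \<le> 2 ^ floorlog 2 N" using fb by simp
  also have "\<dots> < 2^D" unfolding D_def by simp
  finally show "Suc N < 2^D" .
  have fl: "floorlog 2 N = nat \<lfloor>log 2 (real N)\<rfloor> + 1" using N1 by (simp add: floorlog_def)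
  have lg0: "log 2 (real N) \<ge> 0" using N1 by simp
  have Dle: "real D \<le> log 2 (real N) + 2"
    unfolding D_def fl using lg0 by (simp add: of_nat_nat)
  define L where "L = ln r"
  have main: "real D \<le> 3 + 2 * L \<and> L \<ge> 0 \<or> real D \<le> 2"
  proof (cases "r \<le> 1")
    case True
    have "\<lceil>r\<rceil> = 1" using r True by (intro ceiling_unique) auto
    then have "N = 1" unfolding N_def by simp
    then show ?thesis using Dle by simp
  next
    case False
    then have r1: "r > 1" by simp
    have "real N \<le> r + 1" unfolding N_def using r by linarith
    then have "real N \<le> 2 * r" using r1 by simp
    then have "log 2 (real N) \<le> log 2 (2 * r)" using N1 r by simp
    also have "\<dots> = 1 + log 2 r" using r by (simp add: log_mult)
    also have "log 2 r = L / ln 2" unfolding L_def log_def ..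
    also have "L / ln 2 \<le> 2 * L"
    proof -
      have "L \<ge> 0" unfolding L_def using r1 by simp
      moreover have "ln (2::real) \<ge> 1/2" by (rule ln2_ge)
      ultimately have "L * 1 \<le> L * (ln 2 * 2)" by (intro mult_left_mono) auto
      then show ?thesis by (simp add: divide_le_eq)
    qed
    finally have "real D \<le> 3 + 2 * L" using Dle by simp
    moreover have "L \<ge> 0" unfolding L_def using r1 by simp
    ultimately show ?thesis by simp
  qed
  have D0: "real D \<ge> 0" by simp
  have "real (6*D*D + 12*D) = 6 * (real D * real D) + 12 * real D" by simp
  also have "\<dots> \<le> 200 * L^2 + 200"
    using main
  proof
    assume h: "real D \<le> 3 + 2 * L \<and> L \<ge> 0"
    have "real D * real D \<le> (3 + 2*L) * (3 + 2*L)" using h D0 by (intro mult_mono) auto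
    then have e1: "real D * real D \<le> 9 + 12 * L + 4 * L^2" by (simp add: power2_eq_square algebra_simps)
    have "(L - 1/2)^2 \<ge> 0" by simp
    then have e2: "L^2 - L + 1/4 \<ge> 0" by (simp add: power2_eq_square algebra_simps)
    show ?thesis using h e1 e2 by linarith
  next
    assume h: "real D \<le> 2"
    have "real D * real D \<le> 2 * 2" using h D0 by (intro mult_mono) auto
    moreover have "L^2 \<ge> 0" by simp
    ultimately show ?thesis using h by linarith
  qed
  finally show "real (6*D*D + 12*D) \<le> 200 * (ln r)^2 + 200" unfolding L_def .
qed



theorem theorem5:
  "\<exists>C::real. C > 0 \<and>
     (\<forall>K \<epsilon> :: real. K > 0 \<longrightarrow> \<epsilon> > 0 \<longrightarrow>
        (let N = nat \<lceil>K / \<epsilon>\<rceil> in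
         \<exists>T :: qtree. \<forall>u :: nat \<Rightarrow> real set \<Rightarrow> real.
            (\<forall>i<3. valid_utility K (u i)) \<longrightarrow> nondegenerate u N \<longrightarrow>
            (case run (choice u N) T of (y0, y1, y2, \<pi>) \<Rightarrow>
                envy_free_solution (choice u N) N y0 y1 y2 \<pi>) \<and>
            real (num_queries (choice u N) T) \<le> C * (ln (K / \<epsilon>))\<^sup>2 + C))"
proof (intro exI[of _ 200] conjI allI impI)
  show "(200::real) > 0" by simp
  fix K \<epsilon> :: real
  assume K: "K > 0" and e: "\<epsilon> > 0"
  define N where "N = nat \<lceil>K / \<epsilon>\<rceil>"
  define D where "D = floorlog 2 N + 1"
  have r: "K / \<epsilon> > 0" using K e by simp
  note bd = bound[OF r, folded N_def, folded D_def]
  show "let N = nat \<lceil>K / \<epsilon>\<rceil> in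
         \<exists>T :: qtree. \<forall>u :: nat \<Rightarrow> real set \<Rightarrow> real.
            (\<forall>i<3. valid_utility K (u i)) \<longrightarrow> nondegenerate u N \<longrightarrow>
            (case run (choice u N) T of (y0, y1, y2, \<pi>) \<Rightarrow>
                envy_free_solution (choice u N) N y0 y1 y2 \<pi>) \<and>
            real (num_queries (choice u N) T) \<le> 200 * (ln (K / \<epsilon>))\<^sup>2 + 200"
    unfolding Let_def N_def[symmetric]
  proof (intro exI[of _ "TT N D"] allI impI)
    fix u :: "nat \<Rightarrow> real set \<Rightarrow> real"
    assume vu: "\<forall>i<3. valid_utility K (u i)" and nd: "nondegenerate u N"
    interpret setting u N K using vu nd bd(3) by unfold_locales auto
    have ts: "(case run P (TT N D) of (y0, y1, y2, \<pi>) \<Rightarrow> envy_free_solution P N y0 y1 y2 \<pi>) \<and>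
      num_queries P (TT N D) \<le> 6*D*D + 12*D" using TT_spec[OF bd(2)] .
    then have "real (num_queries P (TT N D)) \<le> real (6*D*D + 12*D)" by linarith
    then show "(case run (choice u N) (TT N D) of (y0, y1, y2, \<pi>) \<Rightarrow>
                envy_free_solution (choice u N) N y0 y1 y2 \<pi>) \<and>
            real (num_queries (choice u N) (TT N D)) \<le> 200 * (ln (K / \<epsilon>))\<^sup>2 + 200"
      using ts bd(1) by linarith
  qed
qed

end
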